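(* For all nonnegative integers $L,M$, \[ \sum_{j\in\mathbb{Z}}(-1)^j q^{\frac{1}{2}j(5j+3)} \begin{bmatrix}L+M+j\\ M-j-1\end{bmatrix}\begin{bmatrix}L+M-j\\ M+j\end{bmatrix} =\sum_{n\geq 0}q^{n(n+1)}\begin{bmatrix}2L+M-n\\ 2L+1\end{bmatrix}\begin{bmatrix}L\\ n\end{bmatrix}. \]
   Context: $(x;q)_n=\prod_{i=0}^{n-1}(1-xq^i)$, $(q)_n=(q;q)_n$. The $q$-binomial coefficient is $\begin{bmatrix}n\\ m\end{bmatrix}=\frac{(q)_n}{(q)_m(q)_{n-m}}$ if $m$ and $n-m$ are nonnegative integers and $0$ otherwise. *)

theory Defs
  imports "HOL-Computational_Algebra.Formal_Power_Series"
begin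

definition qpoch :: "'a::field fps \<Rightarrow> nat \<Rightarrow> 'a fps" where
  "qpoch q n = (\<Prod>i<n. 1 - q ^ (i + 1))"

text \<open>Gaussian binomial [n over m] = (q)_n / ((q)_m (q)_(n-m)) if m, n-m >= 0, else 0.
  The denominators have constant coefficient 1, so fps inverse is the genuine inverse.\<close>
definition qbinom :: "'a::field fps \<Rightarrow> int \<Rightarrow> int \<Rightarrow> 'a fps" where
  "qbinom q n m = (if 0 \<le> m \<and> 0 \<le> n - m
     then qpoch q (nat n) * inverse (qpoch q (nat m) * qpoch q (nat (n - m)))
     else 0)"

end

theory Submission
  imports Defs "HOL-Computational_Algebra.Formal_Laurent_Series" "HOL-Library.Groups_Big_Fun"
begin

definition qp :: "nat \<Rightarrow> 'a::field fls" where
  "qp n = (\<Prod>i<n. 1 - fls_X ^ (i + 1))"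

definition gb :: "int \<Rightarrow> int \<Rightarrow> 'a::field fls" where
  "gb n k = (if 0 \<le> k \<and> k \<le> n then qp (nat n) / (qp (nat k) * qp (nat (n - k))) else 0)"

definition xp :: "int \<Rightarrow> 'a::field fls" where
  "xp e = fls_X powi e"

definition sg :: "int \<Rightarrow> 'a::field fls" where
  "sg j = (if even j then 1 else -1)"

lemma one_minus_X_pow_nz: "(1 - fls_X ^ (i + 1) :: 'a::field fls) \<noteq> 0"
proof
  assume "(1 - fls_X ^ (i + 1) :: 'a fls) = 0"
  then have "fls_nth (1 - fls_X ^ (i + 1) :: 'a fls) 0 = 0" by simp
  then show False by simp
qed

lemma qp_0[simp]: "qp 0 = 1" by (simp add: qp_def)

lemma qp_Suc: "(qp (Suc n) :: 'a::field fls) = qp n * (1 - fls_X ^ Suc n)"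
  unfolding qp_def by simp

lemma one_minus_X_Suc_nz: "(1 - fls_X ^ Suc i :: 'a::field fls) \<noteq> 0"
  using one_minus_X_pow_nz[of i, where 'a='a] by simp

lemma qp_nz: "(qp n :: 'a::field fls) \<noteq> 0"
proof (induct n)
  case 0 show ?case by simp
next
  case (Suc n)
  then show ?case unfolding qp_Suc using one_minus_X_Suc_nz[of n, where 'a='a] by simp
qed

lemma xp_add: "(xp (a + b) :: 'a::field fls) = xp a * xp b"
  unfolding xp_def by (simp add: fls_X_intpow_times_fls_X_intpow)

lemma xp_nat: "(xp (int n) :: 'a::field fls) = fls_X ^ n"
  unfolding xp_def by simp

lemma xp_0[simp]: "xp 0 = 1" unfolding xp_def by simp

lemma gb_zero: "\<not> (0 \<le> k \<and> k \<le> n) \<Longrightarrow> gb n k = 0"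
  unfolding gb_def by auto

lemma gb_nn: "0 \<le> n \<Longrightarrow> gb n n = 1"
  unfolding gb_def using qp_nz by simp

lemma gb_n0: "0 \<le> n \<Longrightarrow> gb n 0 = 1"
  unfolding gb_def using qp_nz by simp

lemma gb_sym: "gb n k = gb n (n - k)"
  unfolding gb_def by (auto simp: mult.commute)

lemma pascal_core0:
  fixes A B C a b :: "'a::field fls"
  assumes "B \<noteq> 0" "C \<noteq> 0" "a \<noteq> 0" "b \<noteq> 0"
  shows "A * (1 - (1 - a) * (1 - b)) / (B * a * (C * b)) = A / (B * (C * b)) + (1 - a) * (A / (B * a * C))"
  using assms by (simp add: field_simps)

lemma pascal_core:
  fixes A B C u v :: "'a::field fls"
  assumes "B \<noteq> 0" "C \<noteq> 0" "1 - u \<noteq> 0" "1 - v \<noteq> 0"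
  shows "A * (1 - u * v) / (B * (1 - u) * (C * (1 - v))) = A / (B * (C * (1 - v))) + u * (A / (B * (1 - u) * C))"
  using pascal_core0[OF assms, of A] by simp

lemma gb_nat:
  assumes "k \<le> n"
  shows "(gb (int n) (int k) :: 'a::field fls) = qp n / (qp k * qp (n - k))"
proof -
  have e: "int n - int k = int (n - k)" using assms by simp
  show ?thesis unfolding gb_def e nat_int using assms by simp
qed

lemma pascal_nat:
  "(gb (int (Suc (K + Suc D))) (int (Suc K)) :: 'a::field fls) =
     gb (int (K + Suc D)) (int K) + fls_X ^ Suc K * gb (int (K + Suc D)) (int (Suc K))"
proof -
  have pw: "(fls_X ^ Suc (K + Suc D) :: 'a fls) = fls_X ^ Suc K * fls_X ^ Suc D"
    by (simp only: power_add[symmetric]) simp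
  have g1: "(gb (int (Suc (K + Suc D))) (int (Suc K)) :: 'a fls) = qp (Suc (K + Suc D)) / (qp (Suc K) * qp (Suc D))"
    by (subst gb_nat) auto
  have g2: "(gb (int (K + Suc D)) (int K) :: 'a fls) = qp (K + Suc D) / (qp K * qp (Suc D))"
    by (subst gb_nat) auto
  have g3: "(gb (int (K + Suc D)) (int (Suc K)) :: 'a fls) = qp (K + Suc D) / (qp (Suc K) * qp D)"
    by (subst gb_nat) auto
  note nzK = one_minus_X_Suc_nz[of K, where 'a='a]
  note nzD = one_minus_X_Suc_nz[of D, where 'a='a]
  show ?thesis
    unfolding g1 g2 g3 qp_Suc[of "K + Suc D"] qp_Suc[of K] qp_Suc[of D] pw
    by (rule pascal_core[OF qp_nz qp_nz nzK nzD])
qed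

lemma pascalA:
  assumes "n \<noteq> 0 \<or> k \<noteq> 0"
  shows "(gb n k :: 'a::field fls) = gb (n - 1) (k - 1) + xp k * gb (n - 1) k"
proof -
  consider "k < 0" | "k = 0" | "k > n" "k > 0" | "k = n" "k > 0" | "0 < k" "k < n" by linarith
  then show ?thesis
  proof cases
    case 1
    have "(gb n k :: 'a fls) = 0" "(gb (n - 1) (k - 1) :: 'a fls) = 0" "(gb (n - 1) k :: 'a fls) = 0" using 1 by (auto intro!: gb_zero)
    then show ?thesis by simp
  next
    case 2
    show ?thesis
    proof (cases "n < 0")
      case True
      have "(gb n k :: 'a fls) = 0" "(gb (n - 1) (k - 1) :: 'a fls) = 0" "(gb (n - 1) k :: 'a fls) = 0" using True by (auto intro!: gb_zero)
      then show ?thesis by simp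
    next
      case False
      then have "n > 0" using assms 2 by linarith
      have "(gb n k :: 'a fls) = 1" using 2 \<open>n > 0\<close> by (simp add: gb_n0)
      moreover have "(gb (n - 1) (k - 1) :: 'a fls) = 0" using 2 by (auto intro!: gb_zero)
      moreover have "(gb (n - 1) k :: 'a fls) = 1" using 2 \<open>n > 0\<close> by (simp add: gb_n0)
      ultimately show ?thesis using 2 by simp
    qed
  next
    case 3
    have "(gb n k :: 'a fls) = 0" "(gb (n - 1) (k - 1) :: 'a fls) = 0" "(gb (n - 1) k :: 'a fls) = 0" using 3 by (auto intro!: gb_zero)
    then show ?thesis by simp
  next
    case 4
    have "(gb n k :: 'a fls) = 1" using 4 by (simp add: gb_nn)
    moreover have "(gb (n - 1) (k - 1) :: 'a fls) = 1" using 4 by (simp add: gb_nn)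
    moreover have "(gb (n - 1) k :: 'a fls) = 0" using 4 by (auto intro!: gb_zero)
    ultimately show ?thesis by simp
  next
    case 5
    define K where "K = nat (k - 1)"
    define D where "D = nat (n - k - 1)"
    have K0: "int K = k - 1" using 5 unfolding K_def by linarith
    have D0: "int D = n - k - 1" using 5 unfolding D_def by linarith
    have n1: "n = int (Suc (K + Suc D))" using K0 D0 by linarith
    have n2: "n - 1 = int (K + Suc D)" using K0 D0 by linarith
    have k1: "k = int (Suc K)" using K0 by linarith
    have k2: "k - 1 = int K" using K0 by linarith
    have xk: "xp k = (fls_X ^ Suc K :: 'a fls)" unfolding k1 by (rule xp_nat)
    show ?thesis unfolding xk n2 k2 unfolding n1 k1 by (rule pascal_nat)
  qed
qed


lemma pascalB:
  assumes "n \<noteq> 0 \<or> k \<noteq> 0"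
  shows "(gb n k :: 'a::field fls) = xp (n - k) * gb (n - 1) (k - 1) + gb (n - 1) k"
proof -
  have "(gb n k :: 'a fls) = gb n (n - k)" by (rule gb_sym)
  also have "\<dots> = gb (n - 1) (n - k - 1) + xp (n - k) * gb (n - 1) (n - k)"
    using assms by (intro pascalA) auto
  also have "(gb (n - 1) (n - k - 1) :: 'a fls) = gb (n - 1) k"
    by (subst gb_sym) simp
  also have "(gb (n - 1) (n - k) :: 'a fls) = gb (n - 1) (k - 1)"
    by (subst gb_sym) simp
  finally show ?thesis by simp
qed

lemma gb_nz_bounds: "gb n k \<noteq> 0 \<Longrightarrow> 0 \<le> k \<and> k \<le> n"
  using gb_zero by blast

lemma fin_bounds:
  fixes f :: "int \<Rightarrow> 'b::zero"
  assumes "\<And>j. f j \<noteq> 0 \<Longrightarrow> a \<le> j \<and> j \<le> b"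
  shows "finite {j. f j \<noteq> 0}"
  by (rule finite_subset[of _ "{a..b}"]) (use assms in auto)

lemma fin_gbP:
  fixes f :: "int \<Rightarrow> 'b::zero"
  assumes "\<And>j. f j \<noteq> 0 \<Longrightarrow> gb (X + j) (Y - j) \<noteq> 0"
  shows "finite {j. f j \<noteq> 0}"
proof (rule fin_bounds)
  fix j assume "f j \<noteq> 0"
  then have "0 \<le> Y - j \<and> Y - j \<le> X + j" using assms gb_nz_bounds by blast
  then show "- (\<bar>X\<bar> + \<bar>Y\<bar>) \<le> j \<and> j \<le> \<bar>X\<bar> + \<bar>Y\<bar>" by linarith
qed

lemma fin_gbM:
  fixes f :: "int \<Rightarrow> 'b::zero"
  assumes "\<And>j. f j \<noteq> 0 \<Longrightarrow> gb (X - j) (Y + j) \<noteq> 0"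
  shows "finite {j. f j \<noteq> 0}"
proof (rule fin_bounds)
  fix j assume "f j \<noteq> 0"
  then have "0 \<le> Y + j \<and> Y + j \<le> X - j" using assms gb_nz_bounds by blast
  then show "- (\<bar>X\<bar> + \<bar>Y\<bar>) \<le> j \<and> j \<le> \<bar>X\<bar> + \<bar>Y\<bar>" by linarith
qed

lemma fin_gbL:
  fixes f :: "int \<Rightarrow> 'b::zero"
  assumes "\<And>j. f j \<noteq> 0 \<Longrightarrow> gb L j \<noteq> 0"
  shows "finite {j. f j \<noteq> 0}"
proof (rule fin_bounds)
  fix j assume "f j \<noteq> 0"
  then have "0 \<le> j \<and> j \<le> L" using assms gb_nz_bounds by blast
  then show "0 \<le> j \<and> j \<le> L" by linarith
qed

lemma SA_add:
  fixes f g :: "int \<Rightarrow> 'b::comm_monoid_add"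
  assumes "finite {j. f j \<noteq> 0}" "finite {j. g j \<noteq> 0}"
  shows "Sum_any (\<lambda>j. f j + g j) = Sum_any f + Sum_any g"
  using Sum_any.distrib[OF assms] .

lemma SA_cmult:
  fixes f :: "int \<Rightarrow> 'b::semiring_0"
  assumes "finite {j. f j \<noteq> 0}"
  shows "Sum_any (\<lambda>j. c * f j) = c * Sum_any f"
  using Sum_any_right_distrib[OF assms] by simp

lemma SA_neg:
  fixes f :: "int \<Rightarrow> 'b::ab_group_add"
  shows "Sum_any (\<lambda>j. - f j) = - Sum_any f"
proof -
  have e: "{j. - f j \<noteq> 0} = {j. f j \<noteq> 0}" by auto
  show ?thesis unfolding Sum_any.expand_set e by (simp add: sum_negf)
qed

lemma SA_reflect:
  fixes f :: "int \<Rightarrow> 'b::comm_monoid_add"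
  shows "Sum_any f = Sum_any (\<lambda>j. f (c - j))"
proof (rule Sum_any.reindex_cong)
  show "bij (\<lambda>j::int. c - j)" by (rule o_bij[where g="\<lambda>j. c - j"]) (auto simp: fun_eq_iff)
qed (simp add: comp_def)

lemma SA_shift:
  fixes f :: "int \<Rightarrow> 'b::comm_monoid_add"
  shows "Sum_any f = Sum_any (\<lambda>j. f (j + c))"
proof (rule Sum_any.reindex_cong)
  show "bij (\<lambda>j::int. j + c)" by (rule o_bij[where g="\<lambda>j. j - c"]) (auto simp: fun_eq_iff)
qed (simp add: comp_def)

lemma SA_antisym:
  fixes f :: "int \<Rightarrow> 'b::ab_group_add"
  assumes fin: "finite {j. f j \<noteq> 0}" and anti: "\<And>j. f (-1 - j) = - f j"
  shows "Sum_any f = 0"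
proof -
  define g where "g j = (if 0 \<le> j then f j else 0)" for j
  define h where "h j = (if j < 0 then f j else 0)" for j
  have fg: "finite {j. g j \<noteq> 0}" by (rule finite_subset[OF _ fin]) (auto simp: g_def)
  have fh: "finite {j. h j \<noteq> 0}" by (rule finite_subset[OF _ fin]) (auto simp: h_def)
  have "Sum_any f = Sum_any (\<lambda>j. g j + h j)" by (rule Sum_any.cong) (simp add: g_def h_def)
  also have "\<dots> = Sum_any g + Sum_any h" by (rule SA_add[OF fg fh])
  also have "Sum_any h = Sum_any (\<lambda>j. h (-1 - j))" by (rule SA_reflect)
  also have "\<dots> = Sum_any (\<lambda>j. - g j)"
    by (rule Sum_any.cong) (auto simp: g_def h_def anti)
  also have "\<dots> = - Sum_any g" by (rule SA_neg)
  finally show ?thesis by simp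
qed


lemma pascalA':
  assumes "n = n' + 1" "n'' = n'" "k = k' + 1" "k'' = k" "k''' = k" "n \<noteq> 0 \<or> k \<noteq> 0"
  shows "(gb n k :: 'a::field fls) = gb n' k' + xp k'' * gb n'' k'''"
  using pascalA[of n k] assms by simp

lemma pascalB':
  assumes "n = n' + 1" "n'' = n'" "k = k' + 1" "k'' = k" "d = n - k" "n \<noteq> 0 \<or> k \<noteq> 0"
  shows "(gb n k :: 'a::field fls) = xp d * gb n' k' + gb n'' k''"
  using pascalB[of n k] assms by simp

lemma gb_eq: "a = a' \<Longrightarrow> b = b' \<Longrightarrow> gb a b = gb a' b'" by simp
lemma xp_eq: "a = a' \<Longrightarrow> xp a = xp a'" by simp

definition e1 :: "int \<Rightarrow> int" where "e1 j = j * (5 * j + 1) div 2"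
definition e3 :: "int \<Rightarrow> int" where "e3 j = j * (5 * j + 3) div 2"

lemma e1_2: "2 * e1 j = j * (5 * j + 1)"
proof -
  have "even (j * (5 * j + 1))" by (cases "even j") auto
  then show ?thesis unfolding e1_def by simp
qed

lemma e3_2: "2 * e3 j = j * (5 * j + 3)"
proof -
  have "even (j * (5 * j + 3))" by (cases "even j") auto
  then show ?thesis unfolding e3_def by simp
qed

lemma e3_e1: "e3 j = e1 j + j"
proof -
  have "2 * e3 j = 2 * (e1 j + j)" unfolding distrib_left e1_2 e3_2 by (simp add: algebra_simps)
  then show ?thesis by simp
qed

lemma e1_neg: "e1 (- j) = e1 j - j"
proof -
  have "2 * e1 (-j) = 2 * (e1 j - j)" unfolding right_diff_distrib e1_2 by (simp add: algebra_simps)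
  then show ?thesis by simp
qed

lemma e3_ref: "e3 (-1 - j) = e3 j + 2 * j + 1"
proof -
  have "2 * e3 (-1 - j) = 2 * (e3 j + 2 * j + 1)" unfolding distrib_left e3_2 by (simp add: algebra_simps)
  then show ?thesis by simp
qed

lemma e1_ref: "e1 (-1 - j) = e1 j + 4 * j + 2"
proof -
  have "2 * e1 (-1 - j) = 2 * (e1 j + 4 * j + 2)" unfolding distrib_left e1_2 by (simp add: algebra_simps)
  then show ?thesis by simp
qed

lemma e1_nonneg: "0 \<le> e1 j"
proof -
  have "0 \<le> j * (5 * j + 1)"
    by (cases "j \<ge> 0") (auto intro: mult_nonneg_nonneg mult_nonpos_nonpos)
  then show ?thesis using e1_2[of j] by linarith
qed

lemma e3_nonneg: "0 \<le> e3 j"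
proof -
  have "0 \<le> j * (5 * j + 3)"
    by (cases "j \<ge> 0") (auto intro: mult_nonneg_nonneg mult_nonpos_nonpos)
  then show ?thesis using e3_2[of j] by linarith
qed

lemma sg_neg: "sg (- j) = sg j" unfolding sg_def by simp
lemma sg_ref: "sg (-1 - j) = - sg j" unfolding sg_def by auto

definition T1 :: "int \<Rightarrow> int \<Rightarrow> int \<Rightarrow> 'a::field fls" where
  "T1 L M j = sg j * xp (e1 j) * (gb (L + M + j) (M - j) * gb (L + M - j) (M + j))"
definition T3 :: "int \<Rightarrow> int \<Rightarrow> int \<Rightarrow> 'a::field fls" where
  "T3 L M j = sg j * xp (e3 j) * (gb (L + M + j) (M - j - 1) * gb (L + M - j) (M + j))"
definition TX :: "int \<Rightarrow> int \<Rightarrow> int \<Rightarrow> 'a::field fls" where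
  "TX L M j = sg j * xp (e1 j) * (gb (L + M + j + 1) (M - j) * gb (L + M - j) (M + j))"
definition U1 :: "int \<Rightarrow> int \<Rightarrow> int \<Rightarrow> 'a::field fls" where
  "U1 L M n = xp (n * n) * (gb (2 * L + M - n) (2 * L) * gb L n)"
definition U3 :: "int \<Rightarrow> int \<Rightarrow> int \<Rightarrow> 'a::field fls" where
  "U3 L M n = xp (n * n + n) * (gb (2 * L + M - n) (2 * L + 1) * gb L n)"
definition UX :: "int \<Rightarrow> int \<Rightarrow> int \<Rightarrow> 'a::field fls" where
  "UX L M n = xp (n * n) * (gb (2 * L + 1 + M - n) (2 * L + 1) * gb L n)"

definition "B1 L M = Sum_any (T1 L M)"
definition "B3 L M = Sum_any (T3 L M)"
definition "BX L M = Sum_any (TX L M)"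
definition "F1 L M = Sum_any (U1 L M)"
definition "F3 L M = Sum_any (U3 L M)"
definition "FX L M = Sum_any (UX L M)"

lemma abs_facts: "(x::int) \<le> \<bar>x\<bar>" "- x \<le> \<bar>x\<bar>" by auto

lemma fin_T1: "finite {j. (T1 L M j :: 'a::field fls) \<noteq> 0}"
proof (rule fin_bounds[where a="-(\<bar>L\<bar> + \<bar>M\<bar> + 1)" and b="\<bar>L\<bar> + \<bar>M\<bar> + 1"])
  fix j assume "(T1 L M j :: 'a fls) \<noteq> 0"
  then have "(gb (L + M + j) (M - j) :: 'a fls) \<noteq> 0" unfolding T1_def by auto
  from gb_nz_bounds[OF this] show "-(\<bar>L\<bar> + \<bar>M\<bar> + 1) \<le> j \<and> j \<le> \<bar>L\<bar> + \<bar>M\<bar> + 1"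
    using abs_facts[of L] abs_facts[of M] by linarith
qed

lemma fin_T3: "finite {j. (T3 L M j :: 'a::field fls) \<noteq> 0}"
proof (rule fin_bounds[where a="-(\<bar>L\<bar> + \<bar>M\<bar> + 1)" and b="\<bar>L\<bar> + \<bar>M\<bar> + 1"])
  fix j assume "(T3 L M j :: 'a fls) \<noteq> 0"
  then have "(gb (L + M + j) (M - j - 1) :: 'a fls) \<noteq> 0" unfolding T3_def by auto
  from gb_nz_bounds[OF this] show "-(\<bar>L\<bar> + \<bar>M\<bar> + 1) \<le> j \<and> j \<le> \<bar>L\<bar> + \<bar>M\<bar> + 1"
    using abs_facts[of L] abs_facts[of M] by linarith
qed

lemma fin_TX: "finite {j. (TX L M j :: 'a::field fls) \<noteq> 0}"
proof (rule fin_bounds[where a="-(\<bar>L\<bar> + \<bar>M\<bar> + 1)" and b="\<bar>L\<bar> + \<bar>M\<bar> + 1"])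
  fix j assume "(TX L M j :: 'a fls) \<noteq> 0"
  then have "(gb (L + M + j + 1) (M - j) :: 'a fls) \<noteq> 0" unfolding TX_def by auto
  from gb_nz_bounds[OF this] show "-(\<bar>L\<bar> + \<bar>M\<bar> + 1) \<le> j \<and> j \<le> \<bar>L\<bar> + \<bar>M\<bar> + 1"
    using abs_facts[of L] abs_facts[of M] by linarith
qed

lemma fin_U1: "finite {j. (U1 L M j :: 'a::field fls) \<noteq> 0}"
  by (rule fin_gbL[where L=L]) (auto simp: U1_def)
lemma fin_U3: "finite {j. (U3 L M j :: 'a::field fls) \<noteq> 0}"
  by (rule fin_gbL[where L=L]) (auto simp: U3_def)
lemma fin_UX: "finite {j. (UX L M j :: 'a::field fls) \<noteq> 0}"
  by (rule fin_gbL[where L=L]) (auto simp: UX_def)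


lemma fin_add:
  fixes f g :: "int \<Rightarrow> 'b::comm_monoid_add"
  assumes "finite {j. f j \<noteq> 0}" "finite {j. g j \<noteq> 0}"
  shows "finite {j. f j + g j \<noteq> 0}"
  by (rule finite_subset[of _ "{j. f j \<noteq> 0} \<union> {j. g j \<noteq> 0}"]) (use assms in auto)

lemma fin_cmult:
  fixes f :: "int \<Rightarrow> 'b::semiring_0"
  assumes "finite {j. f j \<noteq> 0}"
  shows "finite {j. c * f j \<noteq> 0}"
  by (rule finite_subset[OF _ assms]) auto

lemma b1_rec:
  assumes L: "0 \<le> L" and M: "0 \<le> M"
  shows "(B3 L (M + 1) :: 'a::field fls) = B3 L M + xp M * B1 L M"
proof -
  define R :: "int \<Rightarrow> 'a fls" where
    "R j = sg j * xp (e3 j + (M + 1 + j)) * (gb (L + M + 1 + j) (M - j) * gb (L + M - j) (M + 1 + j))" for j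
  have pt: "T3 L (M + 1) j = T3 L M j + xp M * T1 L M j + R j" for j
  proof -
    have hA: "(gb (L + (M + 1) + j) (M + 1 - j - 1) :: 'a fls) = gb (L + M + j) (M - j - 1) + xp (M - j) * gb (L + M + j) (M - j)"
      by (rule pascalA') (use L M in linarith)+
    have hc: "(gb (L + M + 1 + j) (M - j) :: 'a fls) = gb (L + M + j) (M - j - 1) + xp (M - j) * gb (L + M + j) (M - j)"
      by (rule pascalA') (use L M in linarith)+
    have hB: "(gb (L + (M + 1) - j) (M + 1 + j) :: 'a fls) = gb (L + M - j) (M + j) + xp (M + 1 + j) * gb (L + M - j) (M + 1 + j)"
      by (rule pascalA') (use L M in linarith)+
    have x1: "(xp (e1 j) :: 'a fls) = xp (e3 j) * xp (- j)"
      unfolding xp_add[symmetric] by (rule xp_eq) (simp add: e3_e1)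
    have x2: "(xp (M - j) :: 'a fls) = xp M * xp (- j)"
      unfolding xp_add[symmetric] by (rule xp_eq) simp
    have x3: "(xp (M + 1 + j) :: 'a fls) = xp M * xp (1 + j)"
      unfolding xp_add[symmetric] by (rule xp_eq) simp
    have x4: "(xp (e3 j + (M + 1 + j)) :: 'a fls) = xp (e3 j) * (xp M * xp (1 + j))"
      unfolding xp_add[symmetric] by (rule xp_eq) simp
    show ?thesis unfolding T3_def T1_def R_def hA hB hc x1 x2 x3 x4 by (simp add: algebra_simps)
  qed
  have finR: "finite {j. R j \<noteq> 0}"
  proof (rule fin_bounds[where a="-(\<bar>L\<bar> + \<bar>M\<bar> + 1)" and b="\<bar>L\<bar> + \<bar>M\<bar> + 1"])
    fix j assume "R j \<noteq> 0"
    then have "(gb (L + M + 1 + j) (M - j) :: 'a fls) \<noteq> 0" unfolding R_def by auto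
    from gb_nz_bounds[OF this] show "-(\<bar>L\<bar> + \<bar>M\<bar> + 1) \<le> j \<and> j \<le> \<bar>L\<bar> + \<bar>M\<bar> + 1"
      using abs_facts[of L] abs_facts[of M] by linarith
  qed
  have sumR: "Sum_any R = 0"
  proof (rule SA_antisym[OF finR])
    fix j
    have g1: "(gb (L + M + 1 + (-1 - j)) (M - (-1 - j)) :: 'a fls) = gb (L + M - j) (M + 1 + j)"
      by (rule gb_eq) simp_all
    have g2: "(gb (L + M - (-1 - j)) (M + 1 + (-1 - j)) :: 'a fls) = gb (L + M + 1 + j) (M - j)"
      by (rule gb_eq) simp_all
    have x: "(xp (e3 (-1 - j) + (M + 1 + (-1 - j))) :: 'a fls) = xp (e3 j + (M + 1 + j))"
      by (rule xp_eq) (simp add: e3_ref)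
    show "R (-1 - j) = - R j" unfolding R_def g1 g2 x sg_ref by (simp add: algebra_simps)
  qed
  have "(B3 L (M + 1) :: 'a fls) = Sum_any (\<lambda>j. (T3 L M j + xp M * T1 L M j) + R j)"
    unfolding B3_def using pt by simp
  also have "\<dots> = Sum_any (\<lambda>j. T3 L M j + xp M * T1 L M j) + Sum_any R"
    by (rule SA_add[OF fin_add[OF fin_T3 fin_cmult[OF fin_T1]] finR])
  also have "Sum_any (\<lambda>j. T3 L M j + xp M * T1 L M j) = Sum_any (T3 L M) + Sum_any (\<lambda>j. xp M * T1 L M j)"
    by (rule SA_add[OF fin_T3 fin_cmult[OF fin_T1]])
  also have "Sum_any (\<lambda>j. xp M * T1 L M j) = (xp M :: 'a fls) * Sum_any (T1 L M)"
    by (rule SA_cmult[OF fin_T1])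
  finally show ?thesis unfolding B3_def B1_def sumR by simp
qed


lemma SA_negidx:
  fixes f :: "int \<Rightarrow> 'b::comm_monoid_add"
  shows "Sum_any f = Sum_any (\<lambda>j. f (- j))"
  using SA_reflect[of f 0] by simp

lemma b2_rec:
  assumes L: "1 \<le> L" and M: "0 \<le> M"
  shows "(B1 L M :: 'a::field fls) = B1 L (M - 1) + xp M * B3 (L - 1) M + xp M * BX (L - 1) M"
proof -
  define S :: "int \<Rightarrow> 'a fls" where
    "S j = sg j * xp (e1 j + (M - j)) * (gb (L + M - 1 + j) (M - j) * gb (L + M - j) (M + j))" for j
  have pt: "T1 L M j = T1 L (M - 1) j + xp M * T3 (L - 1) M j + S j" for j
  proof -
    have hA: "(gb (L + M + j) (M - j) :: 'a fls) = gb (L + (M - 1) + j) (M - 1 - j) + xp (M - j) * gb (L + M - 1 + j) (M - j)"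
      by (rule pascalA') (use L M in linarith)+
    have hB: "(gb (L + M - j) (M + j) :: 'a fls) = gb (L + (M - 1) - j) (M - 1 + j) + xp (M + j) * gb (L - 1 + M - j) (M + j)"
      by (rule pascalA') (use L M in linarith)+
    have a0: "(gb (L + (M - 1) + j) (M - 1 - j) :: 'a fls) = gb (L - 1 + M + j) (M - j - 1)"
      by (rule gb_eq) simp_all
    have x1: "(xp (e3 j) :: 'a fls) = xp (e1 j) * xp j"
      unfolding xp_add[symmetric] by (rule xp_eq) (simp add: e3_e1)
    have x2: "(xp (M - j) :: 'a fls) = xp M * xp (- j)"
      unfolding xp_add[symmetric] by (rule xp_eq) simp
    have x3: "(xp (M + j) :: 'a fls) = xp M * xp j"
      unfolding xp_add[symmetric] by (rule xp_eq) simp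
    have x4: "(xp (e1 j + (M - j)) :: 'a fls) = xp (e1 j) * (xp M * xp (- j))"
      unfolding xp_add[symmetric] by (rule xp_eq) simp
    have "T1 L M j = sg j * xp (e1 j) * (gb (L + M + j) (M - j) * gb (L + M - j) (M + j))"
      unfolding T1_def ..
    also have "\<dots> = T1 L (M - 1) j + xp M * T3 (L - 1) M j + S j"
      unfolding T1_def T3_def S_def hA
      unfolding hB a0 x1 x2 x3 x4 by (simp add: algebra_simps)
    finally show ?thesis .
  qed
  have finS: "finite {j. S j \<noteq> 0}"
  proof (rule fin_bounds[where a="-(\<bar>L\<bar> + \<bar>M\<bar> + 1)" and b="\<bar>L\<bar> + \<bar>M\<bar> + 1"])
    fix j assume "S j \<noteq> 0"
    then have "(gb (L + M - 1 + j) (M - j) :: 'a fls) \<noteq> 0" unfolding S_def by auto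
    from gb_nz_bounds[OF this] show "-(\<bar>L\<bar> + \<bar>M\<bar> + 1) \<le> j \<and> j \<le> \<bar>L\<bar> + \<bar>M\<bar> + 1"
      using abs_facts[of L] abs_facts[of M] by linarith
  qed
  have sumS: "Sum_any S = xp M * BX (L - 1) M"
  proof -
    have "Sum_any S = Sum_any (\<lambda>j. S (- j))" by (rule SA_negidx)
    also have "\<dots> = Sum_any (\<lambda>j. xp M * TX (L - 1) M j)"
    proof (rule Sum_any.cong)
      fix j
      have g1: "(gb (L + M - 1 + - j) (M - - j) :: 'a fls) = gb (L - 1 + M - j) (M + j)"
        by (rule gb_eq) simp_all
      have g2: "(gb (L + M - - j) (M + - j) :: 'a fls) = gb (L - 1 + M + j + 1) (M - j)"
        by (rule gb_eq) simp_all
      have x: "(xp (e1 (- j) + (M - - j)) :: 'a fls) = xp M * xp (e1 j)"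
        unfolding xp_add[symmetric] by (rule xp_eq) (simp add: e1_neg)
      show "S (- j) = xp M * TX (L - 1) M j"
        unfolding S_def TX_def g1 g2 x sg_neg by (simp add: algebra_simps)
    qed
    also have "\<dots> = xp M * BX (L - 1) M" unfolding BX_def by (rule SA_cmult[OF fin_TX])
    finally show ?thesis .
  qed
  have "(B1 L M :: 'a fls) = Sum_any (\<lambda>j. (T1 L (M - 1) j + xp M * T3 (L - 1) M j) + S j)"
    unfolding B1_def using pt by simp
  also have "\<dots> = Sum_any (\<lambda>j. T1 L (M - 1) j + xp M * T3 (L - 1) M j) + Sum_any S"
    by (rule SA_add[OF fin_add[OF fin_T1 fin_cmult[OF fin_T3]] finS])
  also have "Sum_any (\<lambda>j. T1 L (M - 1) j + xp M * T3 (L - 1) M j) = Sum_any (T1 L (M - 1)) + Sum_any (\<lambda>j. xp M * T3 (L - 1) M j)"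
    by (rule SA_add[OF fin_T1 fin_cmult[OF fin_T3]])
  also have "Sum_any (\<lambda>j. xp M * T3 (L - 1) M j) = (xp M :: 'a fls) * Sum_any (T3 (L - 1) M)"
    by (rule SA_cmult[OF fin_T3])
  finally show ?thesis unfolding B1_def B3_def sumS by simp
qed


lemma b3_rec:
  assumes L: "0 \<le> L" and M: "1 \<le> M"
  shows "(BX L M :: 'a::field fls) = xp (2 * L + 1) * BX L (M - 1) + B1 L M"
proof -
  define V :: "int \<Rightarrow> 'a fls" where
    "V j = sg j * xp (e1 j + (L + 2 * j + 1)) * (gb (L + M + j) (M - j - 1) * gb (L + M - 1 - j) (M + j))" for j
  have pt: "TX L M j = xp (2 * L + 1) * TX L (M - 1) j + T1 L M j + V j" for j
  proof -
    have hA: "(gb (L + M + j + 1) (M - j) :: 'a fls) = xp (L + 2 * j + 1) * gb (L + (M - 1) + j + 1) (M - 1 - j) + gb (L + M + j) (M - j)"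
      by (rule pascalB') (use L M in linarith)+
    have hB: "(gb (L + M - j) (M + j) :: 'a fls) = xp (L - 2 * j) * gb (L + (M - 1) - j) (M - 1 + j) + gb (L + M - 1 - j) (M + j)"
      by (rule pascalB') (use L M in linarith)+
    have a0: "(gb (L + M + j) (M - j - 1) :: 'a fls) = gb (L + (M - 1) + j + 1) (M - 1 - j)"
      by (rule gb_eq) simp_all
    have x1: "(xp (2 * L + 1) :: 'a fls) = xp (L + 2 * j + 1) * xp (L - 2 * j)"
      unfolding xp_add[symmetric] by (rule xp_eq) simp
    have x2: "(xp (e1 j + (L + 2 * j + 1)) :: 'a fls) = xp (e1 j) * xp (L + 2 * j + 1)"
      by (rule xp_add)
    have "TX L M j = sg j * xp (e1 j) * (gb (L + M + j + 1) (M - j) * gb (L + M - j) (M + j))"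
      unfolding TX_def ..
    also have "\<dots> = xp (2 * L + 1) * TX L (M - 1) j + T1 L M j + V j"
      unfolding TX_def T1_def V_def hA a0
      unfolding hB x1 x2 by (simp add: algebra_simps)
    finally show ?thesis .
  qed
  have finV: "finite {j. V j \<noteq> 0}"
  proof (rule fin_bounds[where a="-(\<bar>L\<bar> + \<bar>M\<bar> + 1)" and b="\<bar>L\<bar> + \<bar>M\<bar> + 1"])
    fix j assume "V j \<noteq> 0"
    then have "(gb (L + M + j) (M - j - 1) :: 'a fls) \<noteq> 0" unfolding V_def by auto
    from gb_nz_bounds[OF this] show "-(\<bar>L\<bar> + \<bar>M\<bar> + 1) \<le> j \<and> j \<le> \<bar>L\<bar> + \<bar>M\<bar> + 1"
      using abs_facts[of L] abs_facts[of M] by linarith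
  qed
  have sumV: "Sum_any V = 0"
  proof (rule SA_antisym[OF finV])
    fix j
    have g1: "(gb (L + M + (-1 - j)) (M - (-1 - j) - 1) :: 'a fls) = gb (L + M - 1 - j) (M + j)"
      by (rule gb_eq) simp_all
    have g2: "(gb (L + M - 1 - (-1 - j)) (M + (-1 - j)) :: 'a fls) = gb (L + M + j) (M - j - 1)"
      by (rule gb_eq) simp_all
    have x: "(xp (e1 (-1 - j) + (L + 2 * (-1 - j) + 1)) :: 'a fls) = xp (e1 j + (L + 2 * j + 1))"
      by (rule xp_eq) (simp add: e1_ref)
    show "V (-1 - j) = - V j" unfolding V_def g1 g2 x sg_ref by (simp add: algebra_simps)
  qed
  have "(BX L M :: 'a fls) = Sum_any (\<lambda>j. (xp (2 * L + 1) * TX L (M - 1) j + T1 L M j) + V j)"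
    unfolding BX_def using pt by simp
  also have "\<dots> = Sum_any (\<lambda>j. xp (2 * L + 1) * TX L (M - 1) j + T1 L M j) + Sum_any V"
    by (rule SA_add[OF fin_add[OF fin_cmult[OF fin_TX] fin_T1] finV])
  also have "Sum_any (\<lambda>j. xp (2 * L + 1) * TX L (M - 1) j + T1 L M j) = Sum_any (\<lambda>j. xp (2 * L + 1) * TX L (M - 1) j) + Sum_any (T1 L M)"
    by (rule SA_add[OF fin_cmult[OF fin_TX] fin_T1])
  also have "Sum_any (\<lambda>j. xp (2 * L + 1) * TX L (M - 1) j) = (xp (2 * L + 1) :: 'a fls) * Sum_any (TX L (M - 1))"
    by (rule SA_cmult[OF fin_TX])
  finally show ?thesis unfolding BX_def B1_def sumV by simp
qed

lemma SA_single:
  fixes f :: "int \<Rightarrow> 'b::comm_monoid_add"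
  assumes "\<And>j. j \<noteq> a \<Longrightarrow> f j = 0"
  shows "Sum_any f = f a"
proof -
  have "Sum_any f = sum f {a}" by (rule Sum_any.expand_superset) (use assms in auto)
  then show ?thesis by simp
qed

lemma SA_zero:
  fixes f :: "int \<Rightarrow> 'b::comm_monoid_add"
  assumes "\<And>j. f j = 0"
  shows "Sum_any f = 0"
  using assms by simp

lemma e1_0[simp]: "e1 0 = 0" unfolding e1_def by simp
lemma e3_0[simp]: "e3 0 = 0" unfolding e3_def by simp

lemma B1_M0:
  assumes L: "0 \<le> L"
  shows "(B1 L 0 :: 'a::field fls) = 1"
proof -
  have z: "(T1 L 0 j :: 'a fls) = 0" if "j \<noteq> 0" for j
  proof (rule ccontr)
    assume "(T1 L 0 j :: 'a fls) \<noteq> 0"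
    then have "(gb (L + 0 + j) (0 - j) :: 'a fls) \<noteq> 0" "(gb (L + 0 - j) (0 + j) :: 'a fls) \<noteq> 0"
      unfolding T1_def by auto
    then have "0 \<le> 0 - j" "0 \<le> 0 + j" using gb_nz_bounds by blast+
    then show False using \<open>j \<noteq> 0\<close> by linarith
  qed
  have o: "(T1 L 0 0 :: 'a fls) = 1"
    unfolding T1_def using gb_n0[OF L, where 'a='a] by (simp add: sg_def)
  show ?thesis unfolding B1_def using SA_single[of 0 "T1 L 0", OF z] o by simp
qed


lemma f1_rec:
  assumes L: "0 \<le> L" and M: "0 \<le> M"
  shows "(F3 L (M + 1) :: 'a::field fls) = F3 L M + xp M * F1 L M"
proof -
  have pt: "(U3 L (M + 1) n :: 'a fls) = U3 L M n + xp M * U1 L M n" for n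
  proof -
    have hA: "(gb (2 * L + (M + 1) - n) (2 * L + 1) :: 'a fls) = xp (M - n) * gb (2 * L + M - n) (2 * L) + gb (2 * L + M - n) (2 * L + 1)"
      by (rule pascalB') (use L M in linarith)+
    have x1: "(xp (n * n) :: 'a fls) = xp (n * n + n) * xp (- n)"
      unfolding xp_add[symmetric] by (rule xp_eq) simp
    have x2: "(xp (M - n) :: 'a fls) = xp M * xp (- n)"
      unfolding xp_add[symmetric] by (rule xp_eq) simp
    show ?thesis unfolding U3_def U1_def hA x1 x2 by (simp add: algebra_simps)
  qed
  have "(F3 L (M + 1) :: 'a fls) = Sum_any (\<lambda>n. U3 L M n + xp M * U1 L M n)"
    unfolding F3_def using pt by simp
  also have "\<dots> = Sum_any (U3 L M) + Sum_any (\<lambda>n. xp M * U1 L M n)"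
    by (rule SA_add[OF fin_U3 fin_cmult[OF fin_U1]])
  also have "Sum_any (\<lambda>n. xp M * U1 L M n) = (xp M :: 'a fls) * Sum_any (U1 L M)"
    by (rule SA_cmult[OF fin_U1])
  finally show ?thesis unfolding F3_def F1_def by simp
qed

lemma f3_rec:
  assumes L: "0 \<le> L"
  shows "(FX L M :: 'a::field fls) = xp (2 * L + 1) * FX L (M - 1) + F1 L M"
proof -
  have pt: "(UX L M n :: 'a fls) = xp (2 * L + 1) * UX L (M - 1) n + U1 L M n" for n
  proof -
    have hA: "(gb (2 * L + 1 + M - n) (2 * L + 1) :: 'a fls) = gb (2 * L + M - n) (2 * L) + xp (2 * L + 1) * gb (2 * L + 1 + (M - 1) - n) (2 * L + 1)"
      by (rule pascalA') (use L in linarith)+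
    show ?thesis unfolding UX_def U1_def hA by (simp add: algebra_simps)
  qed
  have "(FX L M :: 'a fls) = Sum_any (\<lambda>n. xp (2 * L + 1) * UX L (M - 1) n + U1 L M n)"
    unfolding FX_def using pt by simp
  also have "\<dots> = Sum_any (\<lambda>n. xp (2 * L + 1) * UX L (M - 1) n) + Sum_any (U1 L M)"
    by (rule SA_add[OF fin_cmult[OF fin_UX] fin_U1])
  also have "Sum_any (\<lambda>n. xp (2 * L + 1) * UX L (M - 1) n) = (xp (2 * L + 1) :: 'a fls) * Sum_any (UX L (M - 1))"
    by (rule SA_cmult[OF fin_UX])
  finally show ?thesis unfolding FX_def F1_def by simp
qed

lemma f2_rec:
  assumes L: "1 \<le> L" and M: "0 \<le> M"
  shows "(F1 L M :: 'a::field fls) = F1 L (M - 1) + xp M * FX (L - 1) M + xp M * F3 (L - 1) M"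
proof -
  define W :: "int \<Rightarrow> 'a fls" where
    "W n = xp (n * n + (M - n)) * (gb (2 * L + M - 1 - n) (2 * L - 1) * gb (L - 1) (n - 1))" for n
  have pt: "U1 L M n = U1 L (M - 1) n + xp M * UX (L - 1) M n + W n" for n
  proof -
    have hA: "(gb (2 * L + M - n) (2 * L) :: 'a fls) = xp (M - n) * gb (2 * L + M - 1 - n) (2 * L - 1) + gb (2 * L + (M - 1) - n) (2 * L)"
      by (rule pascalB') (use L M in linarith)+
    have hB: "(gb L n :: 'a fls) = gb (L - 1) (n - 1) + xp n * gb (L - 1) n"
      by (rule pascalA') (use L in linarith)+
    have g: "(gb (2 * L + M - 1 - n) (2 * L - 1) :: 'a fls) = gb (2 * (L - 1) + 1 + M - n) (2 * (L - 1) + 1)"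
      by (rule gb_eq) simp_all
    have x1: "(xp M :: 'a fls) = xp (M - n) * xp n"
      unfolding xp_add[symmetric] by (rule xp_eq) simp
    have x2: "(xp (n * n + (M - n)) :: 'a fls) = xp (n * n) * xp (M - n)"
      by (rule xp_add)
    show ?thesis unfolding U1_def UX_def W_def hA hB x2 g
      unfolding x1 by (simp add: algebra_simps)
  qed
  have finW: "finite {n. W n \<noteq> 0}"
  proof (rule fin_bounds[where a="-(\<bar>L\<bar> + 1)" and b="\<bar>L\<bar> + 1"])
    fix n assume "W n \<noteq> 0"
    then have "(gb (L - 1) (n - 1) :: 'a fls) \<noteq> 0" unfolding W_def by auto
    from gb_nz_bounds[OF this] show "-(\<bar>L\<bar> + 1) \<le> n \<and> n \<le> \<bar>L\<bar> + 1"
      using abs_facts[of L] by linarith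
  qed
  have sumW: "Sum_any W = xp M * F3 (L - 1) M"
  proof -
    have "Sum_any W = Sum_any (\<lambda>n. W (n + 1))" by (rule SA_shift)
    also have "\<dots> = Sum_any (\<lambda>n. xp M * U3 (L - 1) M n)"
    proof (rule Sum_any.cong)
      fix n
      have g1: "(gb (2 * L + M - 1 - (n + 1)) (2 * L - 1) :: 'a fls) = gb (2 * (L - 1) + M - n) (2 * (L - 1) + 1)"
        by (rule gb_eq) simp_all
      have g2: "(gb (L - 1) (n + 1 - 1) :: 'a fls) = gb (L - 1) n"
        by (rule gb_eq) simp_all
      have x: "(xp ((n + 1) * (n + 1) + (M - (n + 1))) :: 'a fls) = xp M * xp (n * n + n)"
        unfolding xp_add[symmetric] by (rule xp_eq) (simp add: algebra_simps)
      show "W (n + 1) = xp M * U3 (L - 1) M n"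
        unfolding W_def U3_def g1 g2 x by (simp add: algebra_simps)
    qed
    also have "\<dots> = xp M * F3 (L - 1) M" unfolding F3_def by (rule SA_cmult[OF fin_U3])
    finally show ?thesis .
  qed
  have "(F1 L M :: 'a fls) = Sum_any (\<lambda>n. (U1 L (M - 1) n + xp M * UX (L - 1) M n) + W n)"
    unfolding F1_def using pt by simp
  also have "\<dots> = Sum_any (\<lambda>n. U1 L (M - 1) n + xp M * UX (L - 1) M n) + Sum_any W"
    by (rule SA_add[OF fin_add[OF fin_U1 fin_cmult[OF fin_UX]] finW])
  also have "Sum_any (\<lambda>n. U1 L (M - 1) n + xp M * UX (L - 1) M n) = Sum_any (U1 L (M - 1)) + Sum_any (\<lambda>n. xp M * UX (L - 1) M n)"
    by (rule SA_add[OF fin_U1 fin_cmult[OF fin_UX]])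
  also have "Sum_any (\<lambda>n. xp M * UX (L - 1) M n) = (xp M :: 'a fls) * Sum_any (UX (L - 1) M)"
    by (rule SA_cmult[OF fin_UX])
  finally show ?thesis unfolding F1_def FX_def sumW by simp
qed


lemma B1_Mm1: "(B1 L (-1) :: 'a::field fls) = 0"
  unfolding B1_def
proof (rule SA_zero)
  fix j show "(T1 L (-1) j :: 'a fls) = 0"
  proof (rule ccontr)
    assume "(T1 L (-1) j :: 'a fls) \<noteq> 0"
    then have "(gb (L + -1 + j) (-1 - j) :: 'a fls) \<noteq> 0" "(gb (L + -1 - j) (-1 + j) :: 'a fls) \<noteq> 0"
      unfolding T1_def by auto
    then have "0 \<le> -1 - j" "0 \<le> -1 + j" using gb_nz_bounds by blast+
    then show False by linarith
  qed
qed

lemma B3_M0: "(B3 L 0 :: 'a::field fls) = 0"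
  unfolding B3_def
proof (rule SA_zero)
  fix j show "(T3 L 0 j :: 'a fls) = 0"
  proof (rule ccontr)
    assume "(T3 L 0 j :: 'a fls) \<noteq> 0"
    then have "(gb (L + 0 + j) (0 - j - 1) :: 'a fls) \<noteq> 0" "(gb (L + 0 - j) (0 + j) :: 'a fls) \<noteq> 0"
      unfolding T3_def by auto
    then have "0 \<le> 0 - j - 1" "0 \<le> 0 + j" using gb_nz_bounds by blast+
    then show False by linarith
  qed
qed

lemma BX_M0:
  assumes L: "0 \<le> L"
  shows "(BX L 0 :: 'a::field fls) = 1"
proof -
  have z: "(TX L 0 j :: 'a fls) = 0" if "j \<noteq> 0" for j
  proof (rule ccontr)
    assume "(TX L 0 j :: 'a fls) \<noteq> 0"
    then have "(gb (L + 0 + j + 1) (0 - j) :: 'a fls) \<noteq> 0" "(gb (L + 0 - j) (0 + j) :: 'a fls) \<noteq> 0"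
      unfolding TX_def by auto
    then have "0 \<le> 0 - j" "0 \<le> 0 + j" using gb_nz_bounds by blast+
    then show False using \<open>j \<noteq> 0\<close> by linarith
  qed
  have o: "(TX L 0 0 :: 'a fls) = 1"
    unfolding TX_def using gb_n0[OF L, where 'a='a] gb_n0[of "L + 1", where 'a='a] L by (simp add: sg_def)
  show ?thesis unfolding BX_def using SA_single[of 0 "TX L 0", OF z] o by simp
qed

lemma B1_L0:
  assumes M: "0 \<le> M"
  shows "(B1 0 M :: 'a::field fls) = 1"
proof -
  have z: "(T1 0 M j :: 'a fls) = 0" if "j \<noteq> 0" for j
  proof (rule ccontr)
    assume "(T1 0 M j :: 'a fls) \<noteq> 0"
    then have "(gb (0 + M + j) (M - j) :: 'a fls) \<noteq> 0" "(gb (0 + M - j) (M + j) :: 'a fls) \<noteq> 0"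
      unfolding T1_def by auto
    then have "M - j \<le> 0 + M + j" "M + j \<le> 0 + M - j" using gb_nz_bounds by blast+
    then show False using \<open>j \<noteq> 0\<close> by linarith
  qed
  have o: "(T1 0 M 0 :: 'a fls) = 1"
    unfolding T1_def using gb_nn[OF M, where 'a='a] by (simp add: sg_def)
  show ?thesis unfolding B1_def using SA_single[of 0 "T1 0 M", OF z] o by simp
qed

lemma F1_Mm1: "(F1 L (-1) :: 'a::field fls) = 0"
  unfolding F1_def
proof (rule SA_zero)
  fix n show "(U1 L (-1) n :: 'a fls) = 0"
  proof (rule ccontr)
    assume "(U1 L (-1) n :: 'a fls) \<noteq> 0"
    then have "(gb (2 * L + -1 - n) (2 * L) :: 'a fls) \<noteq> 0" "(gb L n :: 'a fls) \<noteq> 0"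
      unfolding U1_def by auto
    then have "2 * L \<le> 2 * L + -1 - n" "0 \<le> n" using gb_nz_bounds by blast+
    then show False by linarith
  qed
qed

lemma F3_M0: "(F3 L 0 :: 'a::field fls) = 0"
  unfolding F3_def
proof (rule SA_zero)
  fix n show "(U3 L 0 n :: 'a fls) = 0"
  proof (rule ccontr)
    assume "(U3 L 0 n :: 'a fls) \<noteq> 0"
    then have "(gb (2 * L + 0 - n) (2 * L + 1) :: 'a fls) \<noteq> 0" "(gb L n :: 'a fls) \<noteq> 0"
      unfolding U3_def by auto
    then have "2 * L + 1 \<le> 2 * L + 0 - n" "0 \<le> n" using gb_nz_bounds by blast+
    then show False by linarith
  qed
qed

lemma FX_M0:
  assumes L: "0 \<le> L"
  shows "(FX L 0 :: 'a::field fls) = 1"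
proof -
  have z: "(UX L 0 n :: 'a fls) = 0" if "n \<noteq> 0" for n
  proof (rule ccontr)
    assume "(UX L 0 n :: 'a fls) \<noteq> 0"
    then have "(gb (2 * L + 1 + 0 - n) (2 * L + 1) :: 'a fls) \<noteq> 0" "(gb L n :: 'a fls) \<noteq> 0"
      unfolding UX_def by auto
    then have "2 * L + 1 \<le> 2 * L + 1 + 0 - n" "0 \<le> n" using gb_nz_bounds by blast+
    then show False using \<open>n \<noteq> 0\<close> by linarith
  qed
  have o: "(UX L 0 0 :: 'a fls) = 1"
    unfolding UX_def using gb_n0[OF L, where 'a='a] gb_nn[of "2 * L + 1", where 'a='a] L by simp
  show ?thesis unfolding FX_def using SA_single[of 0 "UX L 0", OF z] o by simp
qed

lemma F1_L0:
  assumes M: "0 \<le> M"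
  shows "(F1 0 M :: 'a::field fls) = 1"
proof -
  have z: "(U1 0 M n :: 'a fls) = 0" if "n \<noteq> 0" for n
  proof (rule ccontr)
    assume "(U1 0 M n :: 'a fls) \<noteq> 0"
    then have "(gb 0 n :: 'a fls) \<noteq> 0" unfolding U1_def by auto
    then have "0 \<le> n" "n \<le> 0" using gb_nz_bounds by blast+
    then show False using \<open>n \<noteq> 0\<close> by linarith
  qed
  have o: "(U1 0 M 0 :: 'a fls) = 1"
    unfolding U1_def using gb_n0[OF M, where 'a='a] gb_nn[of 0, where 'a='a] by simp
  show ?thesis unfolding F1_def using SA_single[of 0 "U1 0 M", OF z] o by simp
qed

lemma B3_from_B1:
  assumes L: "0 \<le> L" and h: "\<And>m::nat. (B1 L (int m) :: 'a::field fls) = F1 L (int m)"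
  shows "(B3 L (int m) :: 'a fls) = F3 L (int m)"
proof (induct m)
  case 0 show ?case using B3_M0[of L, where 'a='a] F3_M0[of L, where 'a='a] by simp
next
  case (Suc m)
  have "(B3 L (int (Suc m)) :: 'a fls) = B3 L (int m + 1)" by (simp add: add.commute)
  also have "\<dots> = B3 L (int m) + xp (int m) * B1 L (int m)" by (rule b1_rec[OF L]) simp
  also have "\<dots> = F3 L (int m) + xp (int m) * F1 L (int m)" using Suc h by simp
  also have "\<dots> = F3 L (int m + 1)" by (rule f1_rec[OF L, symmetric]) simp
  finally show ?case by (simp add: add.commute)
qed

lemma main_eq:
  "(B1 (int L) (int m) :: 'a::field fls) = F1 (int L) (int m) \<and> (B3 (int L) (int m) :: 'a fls) = F3 (int L) (int m)"
proof (induct L arbitrary: m)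
  case 0
  have h: "(B1 (int 0) (int m) :: 'a fls) = F1 (int 0) (int m)" for m
    using B1_L0[of "int m", where 'a='a] F1_L0[of "int m", where 'a='a] by simp
  show ?case using h B3_from_B1[of "int 0", OF _ h] by simp
next
  case (Suc L)
  define L' where "L' = int L"
  have L'0: "0 \<le> L'" unfolding L'_def by simp
  have IH1: "(B1 L' (int m) :: 'a fls) = F1 L' (int m)" for m using Suc unfolding L'_def by blast
  have IH3: "(B3 L' (int m) :: 'a fls) = F3 L' (int m)" for m using Suc unfolding L'_def by blast
  have X: "(BX L' (int m) :: 'a fls) = FX L' (int m)" for m
  proof (induct m)
    case 0 show ?case using BX_M0[OF L'0, where 'a='a] FX_M0[OF L'0, where 'a='a] by simp
  next
    case (Suc m)
    have "(BX L' (int (Suc m)) :: 'a fls) = xp (2 * L' + 1) * BX L' (int (Suc m) - 1) + B1 L' (int (Suc m))"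
      by (rule b3_rec[OF L'0]) simp
    also have "\<dots> = xp (2 * L' + 1) * FX L' (int (Suc m) - 1) + F1 L' (int (Suc m))"
      using Suc IH1[of "Suc m"] by simp
    also have "\<dots> = FX L' (int (Suc m))" by (rule f3_rec[OF L'0, symmetric])
    finally show ?case .
  qed
  have LS: "int (Suc L) = L' + 1" unfolding L'_def by simp
  have L1: "1 \<le> L' + 1" using L'0 by simp
  have h: "(B1 (L' + 1) (int m) :: 'a fls) = F1 (L' + 1) (int m)" for m
  proof (induct m)
    case 0
    have "(B1 (L' + 1) (int 0) :: 'a fls) = B1 (L' + 1) (int 0 - 1) + xp (int 0) * B3 (L' + 1 - 1) (int 0) + xp (int 0) * BX (L' + 1 - 1) (int 0)"
      by (rule b2_rec[OF L1]) simp
    also have "\<dots> = F1 (L' + 1) (int 0 - 1) + xp (int 0) * F3 (L' + 1 - 1) (int 0) + xp (int 0) * FX (L' + 1 - 1) (int 0)"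
      using IH3[of 0] X[of 0] B1_Mm1[of "L' + 1", where 'a='a] F1_Mm1[of "L' + 1", where 'a='a] by simp
    also have "\<dots> = F1 (L' + 1) (int 0)" using f2_rec[OF L1, of "int 0", where 'a='a] by (simp add: add_ac)
    finally show ?case .
  next
    case (Suc m)
    have "(B1 (L' + 1) (int (Suc m)) :: 'a fls) = B1 (L' + 1) (int (Suc m) - 1) + xp (int (Suc m)) * B3 (L' + 1 - 1) (int (Suc m)) + xp (int (Suc m)) * BX (L' + 1 - 1) (int (Suc m))"
      by (rule b2_rec[OF L1]) simp
    also have "\<dots> = F1 (L' + 1) (int (Suc m) - 1) + xp (int (Suc m)) * F3 (L' + 1 - 1) (int (Suc m)) + xp (int (Suc m)) * FX (L' + 1 - 1) (int (Suc m))"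
      using IH3[of "Suc m"] X[of "Suc m"] Suc by simp
    also have "\<dots> = F1 (L' + 1) (int (Suc m))" using f2_rec[OF L1, of "int (Suc m)", where 'a='a] by (simp add: add_ac)
    finally show ?case .
  qed
  have h3: "(B3 (L' + 1) (int m) :: 'a fls) = F3 (L' + 1) (int m)" for m
    by (rule B3_from_B1) (use L'0 h in auto)
  show ?case unfolding LS using h h3 by blast
qed


lemma f2f_prod: "fps_to_fls (\<Prod>i<(n::nat). f i) = (\<Prod>i<n. fps_to_fls (f i :: 'a::comm_ring_1 fps))"
  by (induct n) (simp_all add: fls_times_fps_to_fls)

lemma f2f_sum: "fps_to_fls (sum f A) = (\<Sum>x\<in>A. fps_to_fls (f x :: 'a::comm_ring_1 fps))"
  by (induct A rule: infinite_finite_induct) simp_all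

lemma f2f_qpoch: "fps_to_fls (qpoch fps_X n :: 'a::field fps) = qp n"
  unfolding qpoch_def qp_def f2f_prod by (simp add: fps_to_fls_power fls_times_fps_to_fls)

lemma qpoch_0th: "(qpoch fps_X n :: 'a::field fps) $ 0 = 1"
  unfolding qpoch_def by (induct n) simp_all

lemma f2f_qbinom: "fps_to_fls (qbinom fps_X n m :: 'a::field fps) = gb n m"
proof (cases "0 \<le> m \<and> 0 \<le> n - m")
  case True
  define P where "P = (qpoch fps_X (nat m) * qpoch fps_X (nat (n - m)) :: 'a fps)"
  have sd: "subdegree P = 0" unfolding P_def by (rule subdegree_eq_0) (simp add: qpoch_0th)
  have "fps_to_fls (qbinom fps_X n m :: 'a fps) = fps_to_fls (qpoch fps_X (nat n) * inverse P)"
    unfolding qbinom_def P_def using True by simp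
  also have "\<dots> = qp (nat n) * inverse (fps_to_fls P)"
    unfolding fls_times_fps_to_fls fls_inverse_fps_to_fls[OF sd] f2f_qpoch ..
  also have "fps_to_fls P = qp (nat m) * qp (nat (n - m))"
    unfolding P_def fls_times_fps_to_fls f2f_qpoch ..
  finally show ?thesis unfolding gb_def using True by (simp add: divide_inverse)
next
  case False
  then show ?thesis unfolding qbinom_def gb_def by auto
qed

lemma sign_conv: "((-1) ^ nat \<bar>j\<bar> :: 'a::field fls) = sg j"
  unfolding sg_def by (auto simp: even_nat_iff)

lemma xpow_conv: "0 \<le> e \<Longrightarrow> (fls_X ^ nat e :: 'a::field fls) = xp e"
  using xp_nat[of "nat e", where 'a='a] by simp

theorem lemma3p2:
  fixes L M :: nat
  defines "q \<equiv> (fps_X :: 'a::field fps)"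
  shows "(\<Sum>j\<in>{-(int L + int M + 1)..int L + int M + 1}.
            (-1) ^ nat \<bar>j\<bar> * q ^ nat ((j * (5 * j + 3)) div 2)
            * qbinom q (int L + int M + j) (int M - j - 1)
            * qbinom q (int L + int M - j) (int M + j))
       = (\<Sum>n\<in>{0..2 * L + M + 1}.
            q ^ (n * (n + 1))
            * qbinom q (int (2 * L + M) - int n) (int (2 * L + 1))
            * qbinom q (int L) (int n))"
proof -
  let ?I = "{-(int L + int M + 1)..int L + int M + 1}"
  have lhs: "fps_to_fls (\<Sum>j\<in>?I.
            (-1) ^ nat \<bar>j\<bar> * q ^ nat ((j * (5 * j + 3)) div 2)
            * qbinom q (int L + int M + j) (int M - j - 1)
            * qbinom q (int L + int M - j) (int M + j)) = (B3 (int L) (int M) :: 'a fls)"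
  proof -
    have "fps_to_fls (\<Sum>j\<in>?I.
            (-1) ^ nat \<bar>j\<bar> * q ^ nat ((j * (5 * j + 3)) div 2)
            * qbinom q (int L + int M + j) (int M - j - 1)
            * qbinom q (int L + int M - j) (int M + j)) = (\<Sum>j\<in>?I. T3 (int L) (int M) j)"
      unfolding f2f_sum
    proof (rule sum.cong[OF refl])
      fix j
      have e: "nat ((j * (5 * j + 3)) div 2) = nat (e3 j)" unfolding e3_def ..
      show "fps_to_fls ((-1) ^ nat \<bar>j\<bar> * q ^ nat ((j * (5 * j + 3)) div 2)
            * qbinom q (int L + int M + j) (int M - j - 1)
            * qbinom q (int L + int M - j) (int M + j)) = (T3 (int L) (int M) j :: 'a fls)"
        unfolding q_def fls_times_fps_to_fls fps_to_fls_power f2f_qbinom e T3_def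
        by (simp add: sign_conv xpow_conv[OF e3_nonneg] fps_to_fls_power)
    qed
    also have "\<dots> = B3 (int L) (int M)"
      unfolding B3_def
    proof (rule Sum_any.expand_superset[symmetric])
      show "finite ?I" by simp
      show "{j. (T3 (int L) (int M) j :: 'a fls) \<noteq> 0} \<subseteq> ?I"
      proof
        fix j assume "j \<in> {j. (T3 (int L) (int M) j :: 'a fls) \<noteq> 0}"
        then have "(gb (int L + int M + j) (int M - j - 1) :: 'a fls) \<noteq> 0" unfolding T3_def by auto
        from gb_nz_bounds[OF this] show "j \<in> ?I" by simp
      qed
    qed
    finally show ?thesis .
  qed
  have rhs: "fps_to_fls (\<Sum>n\<in>{0..2 * L + M + 1}.
            q ^ (n * (n + 1))
            * qbinom q (int (2 * L + M) - int n) (int (2 * L + 1))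
            * qbinom q (int L) (int n)) = (F3 (int L) (int M) :: 'a fls)"
  proof -
    have "fps_to_fls (\<Sum>n\<in>{0..2 * L + M + 1}.
            q ^ (n * (n + 1))
            * qbinom q (int (2 * L + M) - int n) (int (2 * L + 1))
            * qbinom q (int L) (int n)) = (\<Sum>n\<in>{0..2 * L + M + 1}. U3 (int L) (int M) (int n))"
      unfolding f2f_sum
    proof (rule sum.cong[OF refl])
      fix n :: nat
      have x: "(fls_X ^ (n * (n + 1)) :: 'a fls) = xp (int n * int n + int n)"
        using xp_nat[of "n * (n + 1)", where 'a='a] by (simp add: algebra_simps)
      have a1: "int (2 * L + M) - int n = 2 * int L + int M - int n" by simp
      have a2: "int (2 * L + 1) = 2 * int L + 1" by simp
      show "fps_to_fls (q ^ (n * (n + 1))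
            * qbinom q (int (2 * L + M) - int n) (int (2 * L + 1))
            * qbinom q (int L) (int n)) = (U3 (int L) (int M) (int n) :: 'a fls)"
        unfolding q_def fls_times_fps_to_fls fps_to_fls_power f2f_qbinom U3_def fps_X_to_fls x a1 a2
        by (simp add: algebra_simps)
    qed
    also have "\<dots> = (\<Sum>n\<in>int ` {0..2 * L + M + 1}. U3 (int L) (int M) n)"
      by (rule sum.reindex[symmetric, unfolded comp_def]) simp
    also have "int ` {0..2 * L + M + 1} = {0..int (2 * L + M + 1)}"
      by (simp add: image_int_atLeastAtMost)
    also have "(\<Sum>n\<in>{0..int (2 * L + M + 1)}. U3 (int L) (int M) n) = (F3 (int L) (int M) :: 'a fls)"
      unfolding F3_def
    proof (rule Sum_any.expand_superset[symmetric])
      show "finite {0..int (2 * L + M + 1)}" by simp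
      show "{n. (U3 (int L) (int M) n :: 'a fls) \<noteq> 0} \<subseteq> {0..int (2 * L + M + 1)}"
      proof
        fix n assume "n \<in> {n. (U3 (int L) (int M) n :: 'a fls) \<noteq> 0}"
        then have "(gb (int L) n :: 'a fls) \<noteq> 0" unfolding U3_def by auto
        from gb_nz_bounds[OF this] show "n \<in> {0..int (2 * L + M + 1)}" by simp
      qed
    qed
    finally show ?thesis .
  qed
  have key: "(B3 (int L) (int M) :: 'a fls) = F3 (int L) (int M)" using main_eq by blast
  show ?thesis by (rule fps_to_fls_eq_imp_fps_eq) (simp only: lhs rhs key)
qed

end
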